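(* Let $p>3$ be a prime, $a,m\in\mathbb Z_p$ with $m\not\equiv0\pmod p$ and $a\not\equiv0,\pm1,-2\pmod p$, and put $A_k=\binom ak\binom{-1-a}k\binom{2k}k$. Then $$\sum_{k=0}^{p-3}\frac{A_k}{m^k(k+2)}\equiv\frac{4-m}{6(a-1)(a+2)}\sum_{k=0}^{p-1}\frac{kA_k}{m^k}+\frac{m-6}{6(a-1)(a+2)}\sum_{k=0}^{p-1}\frac{A_k}{m^k}+\frac{2a(a+1)-m}{6(a-1)(a+2)}\sum_{k=0}^{p-2}\frac{A_k}{m^k(k+1)}\pmod{p^3}.$$
   Context: $\mathbb Z_p$ denotes the set of rational numbers whose denominator is not divisible by $p$; for $u,v\in\mathbb Z_p$, $u\equiv v\pmod{p^r}$ means $(u-v)/p^r\in\mathbb Z_p$. For $a$ rational, $\binom a0=1$ and $\binom ak=\frac{a(a-1)\cdots(a-k+1)}{k!}$ for $k\ge1$. *)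

theory Defs
  imports Complex_Main "HOL-Computational_Algebra.Primes"
begin

definition p_integral :: "nat \<Rightarrow> rat \<Rightarrow> bool" where
  "p_integral p x \<longleftrightarrow> \<not> (int p dvd snd (quotient_of x))"

definition rat_cong :: "rat \<Rightarrow> rat \<Rightarrow> nat \<Rightarrow> nat \<Rightarrow> bool" where
  "rat_cong u v p r \<longleftrightarrow> p_integral p ((u - v) / (of_nat p) ^ r)"

definition A_seq :: "rat \<Rightarrow> nat \<Rightarrow> rat" where
  "A_seq a k = (a gchoose k) * ((-1 - a) gchoose k) * of_nat ((2*k) choose k)"

end

theory Submission
  imports Defs "HOL-Number_Theory.Cong"
begin


lemma factS: "(fact (Suc k) :: rat) = (of_nat k + 1) * fact k"
  by (simp add: fact_Suc)

lemma gch_Suc: "(x::rat) gchoose (Suc k) = (x gchoose k) * (x - of_nat k) / (of_nat k + 1)"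
proof -
  have "fact (Suc k) * (x gchoose Suc k) = (\<Prod>i = 0..<Suc k. x - of_nat i)" by (rule gbinomial_mult_fact)
  also have "\<dots> = (\<Prod>i = 0..<k. x - of_nat i) * (x - of_nat k)" by simp
  also have "\<dots> = fact k * (x gchoose k) * (x - of_nat k)" by (simp add: gbinomial_mult_fact)
  finally have "fact k * ((of_nat k + 1) * (x gchoose Suc k)) = fact k * ((x gchoose k) * (x - of_nat k))"
    unfolding factS by (simp add: algebra_simps)
  then have "(of_nat k + 1) * (x gchoose Suc k) = (x gchoose k) * (x - of_nat k)" by simp
  then show ?thesis by (simp add: field_simps add_pos_nonneg)
qed

lemma cb_Suc: "(of_nat ((2 * Suc k) choose Suc k) :: rat) = of_nat ((2*k) choose k) * 2 * (2 * of_nat k + 1) / (of_nat k + 1)"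
proof -
  have e1: "(of_nat ((2 * Suc k) choose Suc k) :: rat) = fact (2 * Suc k) / (fact (Suc k) * fact (Suc k))"
    by (subst binomial_fact) auto
  have e2: "(of_nat ((2 * k) choose k) :: rat) = fact (2 * k) / (fact k * fact k)"
    by (subst binomial_fact) auto
  have e3: "fact (2 * Suc k) = (fact (2*k) :: rat) * (2 * of_nat k + 1) * (2 * of_nat k + 2)"
    by (simp add: fact_Suc algebra_simps)
  have K: "\<And>K F G::rat. K \<noteq> 0 \<Longrightarrow> F \<noteq> 0 \<Longrightarrow> G * (2 * K - 1) * (2 * K) / (K * F * (K * F)) = G / (F * F) * 2 * (2 * K - 1) / K"
    by (simp add: field_simps)
  have h1: "2*of_nat k + 1 = 2*(of_nat k+1) - (1::rat)" and h2: "2*of_nat k+2 = 2*(of_nat k+1::rat)" by simp_all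
  have nz: "(of_nat k + 1 :: rat) \<noteq> 0" by (simp add: add_pos_nonneg)
  have aux: "\<And>F G::rat. F \<noteq> 0 \<Longrightarrow> G * (2 * of_nat k + 1) * (2 * of_nat k + 2) / ((of_nat k + 1) * F * ((of_nat k + 1) * F)) = G / (F * F) * 2 * (2 * of_nat k + 1) / (of_nat k + 1)"
    unfolding h1 h2 using K nz by blast
  show ?thesis unfolding e1 e2 e3 factS by (rule aux) simp
qed

lemma A_Suc: "A_seq a (Suc k) = A_seq a k * (-2 * (2 * of_nat k + 1) * (a - of_nat k) * (a + of_nat k + 1)) / (of_nat k + 1)^3"
  unfolding A_seq_def gch_Suc cb_Suc by (simp add: field_simps power3_eq_cube add_pos_nonneg)

lemma step_poly:
  fixes a m X K u v w :: rat
  assumes "m * w = 1" "(K + 1) * u = 1" "(K + 2) * v = 1"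
  shows "m * ((K + 1)^2 * v * (X * (-2 * (2 * K + 1) * (a - K) * (a + K + 1)) * u^3 * w))
       - m * (K ^ 2 * u * X)
     = (4 - m) * K * X + (m - 6) * X + (2 * (a * (a + 1)) - m) * X * u - 6 * (a * (a + 1) - 2) * X * v"
  using assms by algebra

lemma step_gen:
  fixes a m X K :: rat
  assumes "m \<noteq> 0" "K + 1 \<noteq> 0" "K + 2 \<noteq> 0"
  shows "m * ((K + 1)^2 / (K + 2) * (X * (-2 * (2 * K + 1) * (a - K) * (a + K + 1)) / (K + 1)^3 / m))
       - m * (K ^ 2 / (K + 1) * X)
     = (4 - m) * K * X + (m - 6) * X + (2 * (a * (a + 1)) - m) * X / (K + 1) - 6 * (a * (a + 1) - 2) * X / (K + 2)"
  using step_poly[of m "1/m" K "1/(K+1)" "1/(K+2)" X a] assms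
  by (simp add: divide_inverse power_one_over power_inverse)

lemma step_rat:
  fixes a m X :: rat and k :: nat
  assumes "m \<noteq> 0"
  defines "b \<equiv> a * (a + 1)"
  shows "m * ((of_nat k + 1)^2 / (of_nat k + 2) * (X * (-2 * (2 * of_nat k + 1) * (a - of_nat k) * (a + of_nat k + 1)) / (of_nat k + 1)^3 / m))
       - m * (of_nat k ^ 2 / (of_nat k + 1) * X)
     = (4 - m) * of_nat k * X + (m - 6) * X + (2 * b - m) * X / (of_nat k + 1) - 6 * (b - 2) * X / (of_nat k + 2)"
proof -
  have n1: "(of_nat k + 1 :: rat) \<noteq> 0" by (simp add: add_pos_nonneg)
  have n2: "(of_nat k + 2 :: rat) \<noteq> 0" by (simp add: add_pos_nonneg)
  show ?thesis unfolding b_def by (rule step_gen[OF assms(1) n1 n2])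
qed

lemma telescope:
  fixes a m :: rat and n :: nat
  assumes "m \<noteq> 0"
  defines "b \<equiv> a * (a + 1)"
  shows "6 * (b - 2) * (\<Sum>k<n. A_seq a k / m ^ k / (of_nat k + 2))
     = (4 - m) * (\<Sum>k<n. of_nat k * (A_seq a k / m ^ k)) + (m - 6) * (\<Sum>k<n. A_seq a k / m ^ k)
       + (2 * b - m) * (\<Sum>k<n. A_seq a k / m ^ k / (of_nat k + 1))
       - m * (of_nat n ^ 2 / (of_nat n + 1) * (A_seq a n / m ^ n))"
proof (induction n)
  case 0
  then show ?case by simp
next
  case (Suc n)
  have AS: "A_seq a (Suc n) / m ^ Suc n = (A_seq a n / m ^ n) * (-2 * (2 * of_nat n + 1) * (a - of_nat n) * (a + of_nat n + 1)) / (of_nat n + 1)^3 / m"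
    by (simp add: A_Suc)
  note st = step_rat[OF assms(1), of n "A_seq a n / m ^ n" a, folded b_def]
  have e: "of_nat (Suc n) ^ 2 / (of_nat (Suc n) + 1) * (A_seq a (Suc n) / m ^ Suc n) = (of_nat n + 1)^2 / (of_nat n + 2) * ((A_seq a n / m ^ n) * (-2 * (2 * of_nat n + 1) * (a - of_nat n) * (a + of_nat n + 1)) / (of_nat n + 1)^3 / m)"
    unfolding AS by (simp add: add.commute)
  have st2: "m * (of_nat (Suc n) ^ 2 / (of_nat (Suc n) + 1) * (A_seq a (Suc n) / m ^ Suc n)) - m * (of_nat n ^ 2 / (of_nat n + 1) * (A_seq a n / m ^ n))
     = (4 - m) * of_nat n * (A_seq a n / m ^ n) + (m - 6) * (A_seq a n / m ^ n) + (2 * b - m) * (A_seq a n / m ^ n) / (of_nat n + 1) - 6 * (b - 2) * (A_seq a n / m ^ n) / (of_nat n + 2)"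
    unfolding e by (rule st)
  have lin: "\<And>(c::rat) (u::rat) (v::rat) (w::rat) (S2::rat) (S1::rat) (S0::rat) (Sm::rat) (M::rat) (M'::rat) (N::rat) (X::rat). 6*c*S2 = u*S1 + v*S0 + w*Sm - M \<Longrightarrow> M' - M = u*N*X + v*X + w*X/(N+1) - 6*c*X/(N+2) \<Longrightarrow>
     6*c*(S2 + X/(N+2)) = u*(S1+N*X) + v*(S0+X) + w*(Sm+X/(N+1)) - M'"
    by (simp add: algebra_simps)
  show ?case unfolding sum.lessThan_Suc
    by (rule lin[OF Suc.IH st2])
qed


definition pint :: "nat \<Rightarrow> rat \<Rightarrow> bool" where
  "pint p x \<longleftrightarrow> (\<exists>u v::int. x = of_int u / of_int v \<and> \<not> int p dvd v)"

definition punit :: "nat \<Rightarrow> rat \<Rightarrow> bool" where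
  "punit p x \<longleftrightarrow> (\<exists>u v::int. x = of_int u / of_int v \<and> \<not> int p dvd u \<and> \<not> int p dvd v)"

lemma p_integral_iff: "p_integral p x \<longleftrightarrow> pint p x"
proof
  assume "p_integral p x"
  obtain n d where q: "quotient_of x = (n, d)" by (cases "quotient_of x")
  then have "x = of_int n / of_int d" by (rule quotient_of_div)
  with \<open>p_integral p x\<close> q show "pint p x" unfolding p_integral_def pint_def by auto
next
  assume "pint p x"
  then obtain u v where x: "x = of_int u / of_int v" and nv: "\<not> int p dvd v" unfolding pint_def by auto
  have v0: "v \<noteq> 0" using nv by auto
  obtain n d where q: "quotient_of x = (n, d)" by (cases "quotient_of x")
  have xd: "x = of_int n / of_int d" using q by (rule quotient_of_div)
  have d0: "d > 0" using q by (rule quotient_of_denom_pos)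
  have cop: "coprime n d" using q by (rule quotient_of_coprime)
  have "(of_int u :: rat) * of_int d = of_int n * of_int v" using x xd v0 d0
    by (simp add: field_simps)
  then have "u * d = n * v" by (metis of_int_eq_iff of_int_mult)
  then have "d dvd n * v" by (metis dvd_triv_right)
  then have "d dvd v" using cop by (meson coprime_commute coprime_dvd_mult_right_iff)
  then have "\<not> int p dvd d" using nv dvd_trans by blast
  then show "p_integral p x" unfolding p_integral_def q by simp
qed

lemma pint_of_int [simp]: "prime p \<Longrightarrow> pint p (of_int n)"
  unfolding pint_def by (rule exI[of _ n], rule exI[of _ 1]) (auto simp: prime_gt_1_nat)

lemma pint_of_nat [simp]: "prime p \<Longrightarrow> pint p (of_nat n)"
  using pint_of_int[of p "int n"] by simp

lemma pint_numeral [simp]: "prime p \<Longrightarrow> pint p (numeral n)"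
  using pint_of_int[of p "numeral n"] by simp

lemma pint_1 [simp]: "prime p \<Longrightarrow> pint p 1" and pint_0 [simp]: "prime p \<Longrightarrow> pint p 0"
  using pint_of_int[of p 1] pint_of_int[of p 0] by simp_all

lemma pint_add: assumes "prime p" "pint p x" "pint p y" shows "pint p (x + y)"
proof -
  obtain u v u' v' where "x = of_int u / of_int v" "\<not> int p dvd v" "y = of_int u' / of_int v'" "\<not> int p dvd v'"
    using assms unfolding pint_def by auto
  moreover have "\<not> int p dvd v * v'" using assms(1) calculation
    by (metis prime_dvd_mult_iff prime_nat_int_transfer)
  moreover have "v \<noteq> 0" "v' \<noteq> 0" using calculation by auto
  ultimately show ?thesis unfolding pint_def
    by (intro exI[of _ "u * v' + u' * v"] exI[of _ "v * v'"]) (simp add: field_simps)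
qed

lemma pint_mult: assumes "prime p" "pint p x" "pint p y" shows "pint p (x * y)"
proof -
  obtain u v u' v' where "x = of_int u / of_int v" "\<not> int p dvd v" "y = of_int u' / of_int v'" "\<not> int p dvd v'"
    using assms unfolding pint_def by auto
  moreover have "\<not> int p dvd v * v'" using assms(1) calculation
    by (metis prime_dvd_mult_iff prime_nat_int_transfer)
  ultimately show ?thesis unfolding pint_def
    by (intro exI[of _ "u * u'"] exI[of _ "v * v'"]) simp
qed

lemma pint_minus: assumes "pint p x" shows "pint p (- x)"
  using assms unfolding pint_def by (metis minus_divide_left of_int_minus)

lemma pint_diff: "prime p \<Longrightarrow> pint p x \<Longrightarrow> pint p y \<Longrightarrow> pint p (x - y)"
  using pint_add[of p x "- y"] pint_minus[of p y] by simp

lemma pint_power: "prime p \<Longrightarrow> pint p x \<Longrightarrow> pint p (x ^ k)"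
  by (induction k) (auto intro: pint_mult)

lemma pint_prod: "prime p \<Longrightarrow> (\<And>i. i \<in> S \<Longrightarrow> pint p (f i)) \<Longrightarrow> pint p (\<Prod>i\<in>S. f i)"
  by (induction S rule: infinite_finite_induct) (auto intro: pint_mult)

lemma punit_inv: assumes "punit p x" shows "pint p (1 / x)" "pint p x"
proof -
  obtain u v where "x = of_int u / of_int v" "\<not> int p dvd u" "\<not> int p dvd v" using assms unfolding punit_def by auto
  then show "pint p (1 / x)" "pint p x" unfolding pint_def by auto
qed

lemma punit_mult: assumes "prime p" "punit p x" "punit p y" shows "punit p (x * y)"
proof -
  obtain u v u' v' where "x = of_int u / of_int v" "\<not> int p dvd u" "\<not> int p dvd v" "y = of_int u' / of_int v'" "\<not> int p dvd u'" "\<not> int p dvd v'"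
    using assms unfolding punit_def by auto
  moreover have "\<not> int p dvd v * v'" "\<not> int p dvd u * u'" using assms(1) calculation
    by (metis prime_dvd_mult_iff prime_nat_int_transfer)+
  ultimately show ?thesis unfolding punit_def
    by (intro exI[of _ "u * u'"] exI[of _ "v * v'"]) simp
qed

lemma punit_power: "prime p \<Longrightarrow> punit p x \<Longrightarrow> punit p (x ^ k)"
proof (induction k)
  case 0 then show ?case unfolding punit_def
    by (intro exI[of _ 1] exI[of _ 1]) (auto simp: prime_gt_1_nat)
next
  case (Suc k) then show ?case by (simp add: punit_mult)
qed

lemma pint_div: "prime p \<Longrightarrow> pint p x \<Longrightarrow> punit p y \<Longrightarrow> pint p (x / y)"
  using pint_mult[of p x "1 / y"] punit_inv[of p y] by simp

lemma punit_of_int: "\<not> int p dvd n \<Longrightarrow> punit p (of_int n)"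
  unfolding punit_def by (intro exI[of _ n] exI[of _ 1]) (auto simp: prime_gt_1_nat)

lemma punit_of_nat: "\<not> p dvd n \<Longrightarrow> punit p (of_nat n)"
  using punit_of_int[of p "int n"] by simp

lemma punit_I: assumes "prime p" "pint p x" "\<not> pint p (x / of_nat p)" shows "punit p x"
proof -
  obtain u v where x: "x = of_int u / of_int v" "\<not> int p dvd v" using assms unfolding pint_def by auto
  have "\<not> int p dvd u"
  proof
    assume "int p dvd u"
    then obtain w where "u = int p * w" by auto
    then have "x / of_nat p = of_int w / of_int v" using x assms(1) by (simp add: field_simps prime_gt_0_nat)
    then show False using assms(3) x(2) unfolding pint_def by auto
  qed
  then show ?thesis using x unfolding punit_def by auto
qed



lemma root_exists:
  assumes p: "prime p" and "pint p c"
  shows "\<exists>i<p. pint p ((c - of_nat i) / of_nat p)"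
proof -
  obtain u v where c: "c = of_int u / of_int v" and nv: "\<not> int p dvd v" using assms unfolding pint_def by auto
  have pi: "prime (int p)" using p by simp
  have "coprime v (int p)" using nv pi by (metis coprime_commute prime_imp_coprime)
  then obtain w where w: "[v * w = 1] (mod int p)" by (metis cong_solve_coprime_int)
  define i where "i = (u * w) mod int p"
  have i0: "0 \<le> i" "i < int p" unfolding i_def using p prime_gt_0_nat by auto
  have "[u - i * v = u - (u * w) * v] (mod int p)" unfolding i_def
    by (intro cong_diff cong_refl cong_mult) (simp add: cong_def)
  also have "[u - (u * w) * v = u - u * 1] (mod int p)"
    by (intro cong_diff cong_refl) (metis cong_scalar_left mult.assoc mult.commute w)
  finally have "int p dvd u - i * v" by (simp add: cong_0_iff)
  then obtain z where z: "u - i * v = int p * z" by auto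
  have v0: "v \<noteq> 0" using nv by auto
  have "(c - of_nat (nat i)) / of_nat p = of_int z / of_int v"
  proof -
    have "(c - of_int i) * of_int v = of_int (u - i * v)" using c v0 by (simp add: field_simps)
    also have "\<dots> = of_nat p * of_int z" using z by simp
    finally show ?thesis using v0 p i0 by (simp add: field_simps prime_gt_0_nat)
  qed
  then have "pint p ((c - of_nat (nat i)) / of_nat p)" using nv unfolding pint_def by auto
  moreover have "nat i < p" using i0 by auto
  ultimately show ?thesis by blast
qed

lemma gch_div:
  assumes p: "prime p" and "pint p c" and n1: "\<not> pint p ((c + 1) / of_nat p)" and n2: "\<not> pint p ((c + 2) / of_nat p)"
  shows "pint p ((c gchoose (p - 2)) / of_nat p)"
proof -
  obtain i where ip: "i < p" and ci: "pint p ((c - of_nat i) / of_nat p)" using root_exists[OF p assms(2)] by auto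
  have p0: "(of_nat p :: rat) \<noteq> 0" using p prime_gt_0_nat by simp
  have "i \<noteq> p - 1"
  proof
    assume "i = p - 1"
    moreover have "Suc 0 \<le> p" using p prime_gt_0_nat by (simp add: Suc_le_eq)
    ultimately have "(c + 1) / of_nat p = (c - of_nat i) / of_nat p + 1" using p0
      by (simp add: field_simps of_nat_diff)
    then show False using n1 pint_add[OF p ci pint_1[OF p]] by simp
  qed
  moreover have "i \<noteq> p - 2"
  proof
    assume "i = p - 2"
    moreover have "p \<ge> 2" using p prime_ge_2_nat by auto
    ultimately have "(c + 2) / of_nat p = (c - of_nat i) / of_nat p + 1" using p0
      by (simp add: field_simps of_nat_diff)
    then show False using n2 pint_add[OF p ci pint_1[OF p]] by simp
  qed
  ultimately have ik: "i < p - 2" using ip by auto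
  have "(c gchoose (p - 2)) = (\<Prod>j = 0..<p-2. c - of_nat j) / fact (p - 2)"
    using gbinomial_mult_fact[of "p-2" c] by (simp add: field_simps)
  also have "(\<Prod>j = 0..<p-2. c - of_nat j) = (c - of_nat i) * (\<Prod>j \<in> {0..<p-2} - {i}. c - of_nat j)"
    using ik by (subst prod.remove[of _ i]) auto
  finally have "(c gchoose (p - 2)) / of_nat p = ((c - of_nat i) / of_nat p) * (\<Prod>j \<in> {0..<p-2} - {i}. c - of_nat j) / fact (p - 2)"
    by simp
  moreover have "pint p (\<Prod>j \<in> {0..<p-2} - {i}. c - of_nat j)"
    by (rule pint_prod[OF p]) (intro pint_diff[OF p] assms(2) pint_of_nat[OF p])
  moreover have "punit p (fact (p - 2))"
  proof -
    have "\<not> p dvd fact (p - 2)" using p prime_ge_2_nat[OF p] by (subst prime_dvd_fact_iff) auto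
    then have "punit p (of_nat (fact (p - 2)))" by (rule punit_of_nat)
    then show ?thesis by (simp add: of_nat_fact)
  qed
  ultimately show ?thesis using ci by (metis p pint_div pint_mult)
qed

lemma cb_div:
  assumes p: "prime p" and "p > 3"
  shows "p dvd ((2 * (p - 2)) choose (p - 2))"
proof -
  have "fact (p - 2) * fact (2 * (p - 2) - (p - 2)) * ((2 * (p - 2)) choose (p - 2)) = fact (2 * (p - 2))"
    by (rule binomial_fact_lemma) simp
  then have e: "fact (p - 2) * fact (p - 2) * ((2 * (p - 2)) choose (p - 2)) = fact (2 * (p - 2))" by simp
  have "p dvd fact (2 * (p - 2))" using p assms(2) by (subst prime_dvd_fact_iff) auto
  then have "p dvd fact (p - 2) * fact (p - 2) * ((2 * (p - 2)) choose (p - 2))" using e by simp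
  moreover have "\<not> p dvd fact (p - 2)" using p prime_ge_2_nat[OF p] by (subst prime_dvd_fact_iff) auto
  ultimately show ?thesis using p by (simp add: prime_dvd_mult_iff)
qed



lemma alg_poly:
  fixes E m P M N N1 S2 S1 S0 Sm f X X1 D r w eE em eP eM eN :: rat
  assumes "E * eE = 1" "m * em = 1" "P * eP = 1" "M * eM = 1" "N1 * eN = 1"
    and hT: "E * S2 = (4 - m) * S1 + (m - 6) * S0 + w * Sm - m * (f * X)"
    and hX: "X = D * P * eM" and hX1: "X1 = X * r * em"
  shows "(S2 - ((4 - m) * eE * (S1 + N * X + N1 * X1) + (m - 6) * eE * (S0 + X + X1) + w * eE * (Sm + X * eN))) * eP
     = eE * (D * eM) * (- m * f - (4 - m) * (N + N1 * (r * em)) - (m - 6) * (1 + r * em) - w * eN)"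
  using assms by algebra

lemma alg:
  fixes E m P M N N1 S2 S1 S0 Sm f X X1 D r w :: rat
  assumes "E \<noteq> 0" "m \<noteq> 0" "P \<noteq> 0" "M \<noteq> 0" "N1 \<noteq> 0"
    and hT: "E * S2 = (4 - m) * S1 + (m - 6) * S0 + w * Sm - m * (f * X)"
    and hX: "X = D * P / M" and hX1: "X1 = X * r / m"
  shows "(S2 - ((4 - m) / E * (S1 + N * X + N1 * X1) + (m - 6) / E * (S0 + X + X1) + w / E * (Sm + X / N1))) / P
     = (1 / E) * (D / M) * (- m * f - (4 - m) * (N + N1 * (r / m)) - (m - 6) * (1 + r / m) - w / N1)"
  using alg_poly[of E "1/E" m "1/m" P "1/P" M "1/M" N1 "1/N1" S2 S1 S0 w Sm f X D X1 r N] assms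
  by (simp add: divide_inverse)

lemma cong_unfold: "rat_cong x c p r \<longleftrightarrow> pint p ((x - c) / of_nat p ^ r)"
  by (simp add: rat_cong_def p_integral_iff)

lemma punit_nz: "punit p x \<Longrightarrow> x \<noteq> 0"
  unfolding punit_def by auto

theorem theorem6p1:
  fixes p :: nat and a m :: rat
  assumes "prime p" and "p > 3"
    and "p_integral p a" and "p_integral p m"
    and "\<not> rat_cong m 0 p 1"
    and "\<not> rat_cong a 0 p 1" and "\<not> rat_cong a 1 p 1"
    and "\<not> rat_cong a (-1) p 1" and "\<not> rat_cong a (-2) p 1"
  shows "rat_cong
    (\<Sum>k = 0..p-3. A_seq a k / (m ^ k * (of_nat k + 2)))
    ((4 - m) / (6 * (a - 1) * (a + 2)) * (\<Sum>k = 0..p-1. of_nat k * A_seq a k / m ^ k)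
     + (m - 6) / (6 * (a - 1) * (a + 2)) * (\<Sum>k = 0..p-1. A_seq a k / m ^ k)
     + (2 * a * (a + 1) - m) / (6 * (a - 1) * (a + 2))
         * (\<Sum>k = 0..p-2. A_seq a k / (m ^ k * (of_nat k + 1))))
    p 3"
proof -
  note p = assms(1)
  have ai: "pint p a" and mi: "pint p m" using assms(3,4) unfolding p_integral_iff by auto
  have nm: "\<not> pint p (m / of_nat p)" using assms(5) unfolding cong_unfold by simp
  have na0: "\<not> pint p (a / of_nat p)" using assms(6) unfolding cong_unfold by simp
  have na1: "\<not> pint p ((a - 1) / of_nat p)" using assms(7) unfolding cong_unfold by simp
  have nam1: "\<not> pint p ((a + 1) / of_nat p)" using assms(8) unfolding cong_unfold by simp
  have nam2: "\<not> pint p ((a + 2) / of_nat p)" using assms(9) unfolding cong_unfold by simp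
  have mu: "punit p m" by (rule punit_I[OF p mi nm])
  have a1u: "punit p (a - 1)" by (rule punit_I[OF p pint_diff[OF p ai pint_1[OF p]] na1])
  have a2u: "punit p (a + 2)" by (rule punit_I[OF p pint_add[OF p ai pint_numeral[OF p]] nam2])
  have six: "punit p 6"
  proof -
    have "\<not> p dvd 6"
    proof
      assume "p dvd 6"
      then have "p dvd 2 * 3" by simp
      then have "p dvd 2 \<or> p dvd 3" by (simp only: prime_dvd_mult_iff[OF p])
      moreover have "p dvd 2 \<Longrightarrow> p \<le> 2" by (rule dvd_imp_le) simp_all
      moreover have "p dvd 3 \<Longrightarrow> p \<le> 3" by (rule dvd_imp_le) simp_all
      ultimately show False using assms(2) by linarith
    qed
    then show ?thesis using punit_of_nat[of p 6] by simp
  qed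
  define E where "E = 6 * (a - 1) * (a + 2)"
  have Eu: "punit p E" unfolding E_def by (intro punit_mult[OF p] six a1u a2u)
  define n' where "n' = p - 3"
  define n where "n = Suc n'"
  have pn: "p - 3 = n'" "p - 2 = n" "p - 1 = Suc n" using assms(2) unfolding n_def n'_def by auto
  have g1: "pint p ((a gchoose n) / of_nat p)" using gch_div[OF p ai nam1 nam2] pn(2) by simp
  have g2: "pint p (((-1 - a) gchoose n) / of_nat p)"
  proof -
    have e1: "(-1 - a + 1) / of_nat p = - (a / of_nat p)" by simp
    have e2: "(-1 - a + 2) / of_nat p = - ((a - 1) / of_nat p)"
    proof -
      have "-1 - a + 2 = - (a - 1)" by simp
      then show ?thesis by (simp only: minus_divide_left)
    qed
    have c1: "\<not> pint p ((-1 - a + 1) / of_nat p)"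
      unfolding e1 using na0 pint_minus[of p "- (a / of_nat p)"] by auto
    have c2: "\<not> pint p ((-1 - a + 2) / of_nat p)"
      unfolding e2 using na1 pint_minus[of p "- ((a - 1) / of_nat p)"] by auto
    have "pint p (-1 - a)" by (rule pint_diff[OF p pint_minus[OF pint_1[OF p]] ai])
    from gch_div[OF p this c1 c2] show ?thesis unfolding pn(2) .
  qed
  have g3: "pint p (of_nat ((2 * n) choose n) / of_nat p)"
  proof -
    obtain z where "(2 * n) choose n = p * z" using cb_div[OF p assms(2)] pn(2) by (metis dvdE)
    then have "of_nat ((2 * n) choose n) / of_nat p = (of_nat z :: rat)" using p prime_gt_0_nat by simp
    then show ?thesis using p by simp
  qed
  define D where "D = A_seq a n / of_nat p ^ 3"
  have Deq: "D = ((a gchoose n) / of_nat p) * (((-1 - a) gchoose n) / of_nat p) * (of_nat ((2 * n) choose n) / of_nat p)"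
    unfolding D_def A_seq_def by (simp add: power3_eq_cube)
  have Di: "pint p D" unfolding Deq by (intro pint_mult[OF p] g1 g2 g3)
  have m0: "m \<noteq> 0" by (rule punit_nz[OF mu])
  have E0: "E \<noteq> 0" by (rule punit_nz[OF Eu])
  have N1u: "punit p (of_nat n + 1)"
  proof -
    have "\<not> p dvd Suc n"
    proof
      assume "p dvd Suc n"
      then have "p \<le> Suc n" by (rule dvd_imp_le) simp
      then show False using pn(3) assms(2) by linarith
    qed
    then show ?thesis using punit_of_nat[of p "Suc n"] by (simp add: add.commute)
  qed
  have N10: "(of_nat n + 1 :: rat) \<noteq> 0" by (rule punit_nz[OF N1u])
  have P0: "(of_nat p ^ 3 :: rat) \<noteq> 0" using p prime_gt_0_nat by simp
  have Mu: "punit p (m ^ n)" by (rule punit_power[OF p mu])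
  have M0: "m ^ n \<noteq> 0" by (rule punit_nz[OF Mu])
  define X where "X = A_seq a n / m ^ n"
  define X1 where "X1 = A_seq a (Suc n) / m ^ Suc n"
  define r where "r = (-2 * (2 * of_nat n + 1) * (a - of_nat n) * (a + of_nat n + 1)) / (of_nat n + 1) ^ 3"
  define S2 where "S2 = (\<Sum>k<n. A_seq a k / m ^ k / (of_nat k + 2))"
  define S1 where "S1 = (\<Sum>k<n. of_nat k * (A_seq a k / m ^ k))"
  define S0 where "S0 = (\<Sum>k<n. A_seq a k / m ^ k)"
  define Sm where "Sm = (\<Sum>k<n. A_seq a k / m ^ k / (of_nat k + 1))"
  define w where "w = 2 * a * (a + 1) - m"
  define f where "f = (of_nat n ^ 2 / (of_nat n + 1) :: rat)"
  have hT: "E * S2 = (4 - m) * S1 + (m - 6) * S0 + w * Sm - m * (f * X)"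
  proof -
    have t: "6 * (a * (a + 1) - 2) * S2 = (4 - m) * S1 + (m - 6) * S0 + (2 * (a * (a + 1)) - m) * Sm - m * (f * X)"
      unfolding S2_def S1_def S0_def Sm_def f_def X_def by (rule telescope[OF m0])
    have "6 * (a * (a + 1) - 2) = E" unfolding E_def by (simp add: algebra_simps)
    moreover have "2 * (a * (a + 1)) - m = w" unfolding w_def by (simp add: algebra_simps)
    ultimately show ?thesis using t by simp
  qed
  have hX: "X = D * of_nat p ^ 3 / m ^ n" unfolding X_def D_def using P0 by simp
  have hX1: "X1 = X * r / m" unfolding X1_def X_def r_def A_Suc using m0 N10 by (simp add: field_simps)
  have set1: "{0..p-3} = {..<n}" using pn n_def by auto
  have set2: "{0..p-2} = insert n {..<n}" using pn by auto
  have set3: "{0..p-1} = insert (Suc n) (insert n {..<n})" using pn by auto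
  have eL: "(\<Sum>k = 0..p-3. A_seq a k / (m ^ k * (of_nat k + 2))) = S2"
    unfolding set1 S2_def by (simp add: divide_divide_eq_left)
  have e1: "(\<Sum>k = 0..p-1. of_nat k * A_seq a k / m ^ k) = S1 + of_nat n * X + (of_nat n + 1) * X1"
    unfolding set3 S1_def X_def X1_def by (simp add: add.assoc)
  have e0: "(\<Sum>k = 0..p-1. A_seq a k / m ^ k) = S0 + X + X1"
    unfolding set3 S0_def X_def X1_def by (simp add: add.assoc)
  have em: "(\<Sum>k = 0..p-2. A_seq a k / (m ^ k * (of_nat k + 1))) = Sm + X / (of_nat n + 1)"
    unfolding set2 Sm_def X_def by (simp add: divide_divide_eq_left)
  have key: "(S2 - ((4 - m) / E * (S1 + of_nat n * X + (of_nat n + 1) * X1) + (m - 6) / E * (S0 + X + X1) + w / E * (Sm + X / (of_nat n + 1)))) / of_nat p ^ 3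
     = (1 / E) * (D / m ^ n) * (- m * f - (4 - m) * (of_nat n + (of_nat n + 1) * (r / m)) - (m - 6) * (1 + r / m) - w / (of_nat n + 1))"
    by (rule alg[OF E0 m0 P0 M0 N10 hT hX hX1])
  have ri: "pint p r" unfolding r_def
    by (intro pint_div[OF p] pint_mult[OF p] pint_add[OF p] pint_diff[OF p] pint_minus pint_numeral[OF p] pint_of_nat[OF p] pint_1[OF p] ai punit_power[OF p N1u])
  have fi: "pint p f" unfolding f_def
    by (intro pint_div[OF p] pint_power[OF p] pint_of_nat[OF p] N1u)
  have wi: "pint p w" unfolding w_def
    by (intro pint_mult[OF p] pint_add[OF p] pint_diff[OF p] pint_numeral[OF p] pint_1[OF p] ai mi)
  have rhs: "pint p ((1 / E) * (D / m ^ n) * (- m * f - (4 - m) * (of_nat n + (of_nat n + 1) * (r / m)) - (m - 6) * (1 + r / m) - w / (of_nat n + 1)))"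
    by (intro pint_mult[OF p] pint_div[OF p] pint_add[OF p] pint_diff[OF p] pint_minus pint_numeral[OF p] pint_of_nat[OF p] pint_1[OF p]
        punit_inv(1)[OF Eu] Di Mu mu mi ri fi wi N1u)
  show ?thesis unfolding cong_unfold eL e1 e0 em E_def[symmetric] w_def[symmetric] key using rhs .
qed
end
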